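(* Consider the least-squares approximate policy iteration sequence described in the context, and suppose $m+H-1>\log(\delta_{FV})/\log(1/\alpha)$ (with $\delta_{FV}<\infty$). Define $$\tau:=\frac{\alpha^m+\alpha^{m+H-1}}{1-\alpha}\delta_{FV}+\delta_{app}+\delta_{FV}\epsilon_{PE},\qquad \beta:=\alpha^{m+H-1}\delta_{FV}.$$ Then for every $k\ge1$, $$\|J^{\mu_k}-J^*\|_\infty \le \frac{\alpha^{kH}}{1-\alpha}+\frac{2\alpha^H\|J^{\mu_0}-J_0\|_\infty}{1-\alpha}\,k\,\max(\alpha^H,\beta)^{k-1} + \frac{2\alpha^H\frac{\tau}{1-\beta}+\epsilon_{LA}}{(1-\alpha^H)(1-\alpha)}.$$
   Context: Consider a Markov decision process with finite state space $S$, finite action space $A$, transition probabilities $P_{ij}(a)$, rewards $r(s,a)\in[0,1]$, and discount factor $\alpha\in(0,1)$. A (deterministic stationary) policy is a map $\mu:S\to A$; its value is $J^\mu(s)=E[\sum_{t\ge0}\alpha^t r(s_t,\mu(s_t))\mid s_0=s]$, and $J^*(s)=\max_\mu J^\mu(s)$. For a policy $\mu$, $(T_\mu J)(s)=r(s,\mu(s))+\alpha\sum_j P_{sj}(\mu(s))J(j)$; the Bellman operator is $(TJ)(s)=\max_{a\in A}\{r(s,a)+\alpha\sum_j P_{sj}(a)J(j)\}$; powers denote repeated application. $\|\cdot\|_\infty$ denotes the max norm and the induced matrix norm. Least-squares approximate policy iteration: fix integers $m\ge1$, $H\ge1$, constants $\epsilon_{LA},\epsilon_{PE}\ge0$, a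 feature matrix $\Phi\in\mathbb{R}^{|S|\times d}$ whose row $i$ is $\phi(i)^\top$, and subsets $D_k\subseteq S$ ($k\ge0$) such that $\{\phi(i)\}_{i\in D_k}$ has rank $d$. Let $\Phi_{D_k}$ be the submatrix of $\Phi$ with rows indexed by $D_k$, $P_k\in\{0,1\}^{|D_k|\times|S|}$ the matrix selecting the coordinates in $D_k$, and $\mathcal{M}_{k+1}:=\Phi(\Phi_{D_k}^\top\Phi_{D_k})^{-1}\Phi_{D_k}^\top P_k$ for $k\ge0$. Start with arbitrary $J_0\in\mathbb{R}^{|S|}$ and an arbitrary policy $\mu_0$. For each $k\ge0$: $\mu_{k+1}$ is any policy with $\|T^HJ_k-T_{\mu_{k+1}}T^{H-1}J_k\|_\infty\le\epsilon_{LA}$; $w_{k+1}\in\mathbb{R}^{|S|}$ is a noise vector with $w_{k+1}(i)=0$ for $i\notin D_k$ and $\|w_{k+1}\|_\infty\le\epsilon_{PE}$; and $J_{k+1}=\mathcal{M}_{k+1}(T^m_{\mu_{k+1}}T^{H-1}J_k+w_{k+1})$ (equivalently $J_{k+1}=\Phi\theta_{k+1}$ where $\theta_{k+1}$ minimizes $\sum_{i\in D_k}((\Phi\theta)(i)-\hat J_{k+1}(i))^2$ with $\hat J_{k+1}=T^m_{\mu_{k+1}}T^{H-1}J_k+w_{k+1}$). Define $\delta_{FV}:=\sup_{k\ge1}\|\mathcal{M}_k\|_\infty$ and $\delta_{app}:=\sup_{k\ge1}\sup_{\mu}\|\mathcal{M}_kJ^\mu-J^\mu\|_\infty$, the inner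 supremum over all policies. *)

theory Defs
  imports "HOL-Analysis.Analysis"
begin

definition supnorm :: "('s::finite \<Rightarrow> real) \<Rightarrow> real" where
  "supnorm J = Max (range (\<lambda>s. \<bar>J s\<bar>))"

definition opnorm :: "(('s::finite \<Rightarrow> real) \<Rightarrow> ('s \<Rightarrow> real)) \<Rightarrow> real" where
  "opnorm M = Sup {supnorm (M x) | x. supnorm x \<le> 1}"

text \<open>MDP data: P a i j = P_{ij}(a), r s a, discount al.\<close>
definition Tpol :: "('a \<Rightarrow> 's \<Rightarrow> 's \<Rightarrow> real) \<Rightarrow> ('s \<Rightarrow> 'a \<Rightarrow> real) \<Rightarrow> real
   \<Rightarrow> ('s::finite \<Rightarrow> 'a) \<Rightarrow> ('s \<Rightarrow> real) \<Rightarrow> ('s \<Rightarrow> real)" where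
  "Tpol P r al mu J = (\<lambda>s. r s (mu s) + al * (\<Sum>j\<in>UNIV. P (mu s) s j * J j))"

definition Tbell :: "('a::finite \<Rightarrow> 's \<Rightarrow> 's \<Rightarrow> real) \<Rightarrow> ('s \<Rightarrow> 'a \<Rightarrow> real) \<Rightarrow> real
   \<Rightarrow> ('s::finite \<Rightarrow> real) \<Rightarrow> ('s \<Rightarrow> real)" where
  "Tbell P r al J = (\<lambda>s. Max (range (\<lambda>a. r s a + al * (\<Sum>j\<in>UNIV. P a s j * J j))))"

fun pstep :: "('a \<Rightarrow> 's \<Rightarrow> 's \<Rightarrow> real) \<Rightarrow> ('s::finite \<Rightarrow> 'a) \<Rightarrow> nat \<Rightarrow> 's \<Rightarrow> 's \<Rightarrow> real" where
  "pstep P mu 0 s j = (if s = j then 1 else 0)"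
| "pstep P mu (Suc n) s j = (\<Sum>l\<in>UNIV. P (mu s) s l * pstep P mu n l j)"

text \<open>J^mu(s) = E[sum_t al^t r(s_t, mu(s_t)) | s_0 = s], written out.\<close>
definition Jpol :: "('a \<Rightarrow> 's \<Rightarrow> 's \<Rightarrow> real) \<Rightarrow> ('s \<Rightarrow> 'a \<Rightarrow> real) \<Rightarrow> real
   \<Rightarrow> ('s::finite \<Rightarrow> 'a) \<Rightarrow> ('s \<Rightarrow> real)" where
  "Jpol P r al mu = (\<lambda>s. (\<Sum>t. al ^ t * (\<Sum>j\<in>UNIV. pstep P mu t s j * r j (mu j))))"

definition Jstar :: "('a::finite \<Rightarrow> 's \<Rightarrow> 's \<Rightarrow> real) \<Rightarrow> ('s \<Rightarrow> 'a \<Rightarrow> real) \<Rightarrow> real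
   \<Rightarrow> ('s::finite \<Rightarrow> real)" where
  "Jstar P r al = (\<lambda>s. Max (range (\<lambda>mu. Jpol P r al mu s)))"

text \<open>Phi_D^T Phi_D = sum_{i in D} phi(i) phi(i)^T.\<close>
definition gram :: "('s \<Rightarrow> real^'d) \<Rightarrow> 's set \<Rightarrow> real^'d^'d" where
  "gram phi D = (\<Sum>i\<in>D. (\<chi> a b. phi i $ a * phi i $ b))"

text \<open>M J = Phi (Phi_D^T Phi_D)^{-1} Phi_D^T P_D J, where Phi_D^T P_D J = sum_{i in D} J(i) phi(i).\<close>
definition Mproj :: "('s::finite \<Rightarrow> real^'d) \<Rightarrow> 's set \<Rightarrow> ('s \<Rightarrow> real) \<Rightarrow> ('s \<Rightarrow> real)" where
  "Mproj phi D J = (\<lambda>s. phi s \<bullet> (matrix_inv (gram phi D) *v (\<Sum>i\<in>D. J i *\<^sub>R phi i)))"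

end

theory Submission imports Defs begin

fun Sg :: "real \<Rightarrow> real \<Rightarrow> nat \<Rightarrow> real" where
  "Sg x y 0 = 0"
| "Sg x y (Suc k) = x * Sg x y k + y ^ k"

lemma Sg_nonneg: "0 \<le> x \<Longrightarrow> 0 \<le> y \<Longrightarrow> 0 \<le> Sg x y k"
  by (induction k) auto

lemma Sg_bound:
  assumes "0 \<le> x" "0 \<le> y"
  shows "Sg x y k \<le> real k * (max x y) ^ (k - 1)"
proof (induction k)
  case 0 then show ?case by simp
next
  case (Suc k)
  let ?M = "max x y"
  have M0: "0 \<le> ?M" using assms by simp
  show ?case
  proof (cases k)
    case 0 then show ?thesis by simp
  next
    case (Suc k')
    have "x * Sg x y k \<le> ?M * (real k * ?M ^ (k - 1))"
      using Suc.IH assms M0 Sg_nonneg[OF assms, of k] by (intro mult_mono) auto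
    also have "\<dots> = real k * ?M ^ k" using Suc by simp
    finally have a: "x * Sg x y k \<le> real k * ?M ^ k" .
    have b: "y ^ k \<le> ?M ^ k" using assms by (intro power_mono) auto
    show ?thesis using a b by (simp add: algebra_simps)
  qed
qed

lemma final_alg:
  fixes a e :: "nat \<Rightarrow> real" and q al be tau eps :: real
  assumes q: "0 < q" "q < 1" and al: "0 < al" "al < 1" and be: "0 \<le> be" "be < 1"
    and tau: "tau \<ge> 0" and eps: "eps \<ge> 0"
    and erec: "\<And>k. e (Suc k) \<le> be * e k + tau" and e0: "e 0 \<ge> 0"
    and arec: "\<And>k. a (Suc k) \<le> q * a k + (2 * q * e k + eps) / (1 - al)"
    and a0: "a 0 \<le> 1 / (1 - al)"
  shows "a k \<le> q ^ k / (1 - al) + 2 * q * e 0 / (1 - al) * real k * (max q be) ^ (k - 1)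
      + (2 * q * (tau / (1 - be)) + eps) / ((1 - q) * (1 - al))"
proof -
  have eb: "e k \<le> be ^ k * e 0 + tau / (1 - be)" for k
  proof (induction k)
    case 0 then show ?case using tau be by simp
  next
    case (Suc k)
    have "e (Suc k) \<le> be * (be ^ k * e 0 + tau / (1 - be)) + tau"
      using erec[of k] mult_left_mono[OF Suc.IH be(1)] by linarith
    also have "\<dots> = be ^ Suc k * e 0 + tau / (1 - be)" using be by (simp add: field_simps)
    finally show ?case .
  qed
  define G where "G = (2 * q * (tau / (1 - be)) + eps) / (1 - al)"
  define c0 where "c0 = 2 * q * e 0 / (1 - al)"
  have G0: "G \<ge> 0" unfolding G_def using q al be tau eps by (intro divide_nonneg_pos add_nonneg_nonneg mult_nonneg_nonneg) auto
  have c00: "c0 \<ge> 0" unfolding c0_def using q al e0 by (intro divide_nonneg_pos mult_nonneg_nonneg) auto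
  have ab: "a k \<le> q ^ k / (1 - al) + c0 * Sg q be k + G * (1 - q ^ k) / (1 - q)" for k
  proof (induction k)
    case 0 then show ?case using a0 by simp
  next
    case (Suc k)
    have t: "(2 * q * e k + eps) / (1 - al) \<le> (2 * q * (be ^ k * e 0 + tau / (1 - be)) + eps) / (1 - al)"
      using eb[of k] q al by (intro divide_right_mono add_right_mono mult_left_mono) auto
    have "a (Suc k) \<le> q * (q ^ k / (1 - al) + c0 * Sg q be k + G * (1 - q ^ k) / (1 - q))
        + (2 * q * (be ^ k * e 0 + tau / (1 - be)) + eps) / (1 - al)"
      using arec[of k] mult_left_mono[OF Suc.IH, of q] q t by linarith
    also have "\<dots> = q ^ Suc k / (1 - al) + c0 * Sg q be (Suc k) + G * (1 - q ^ Suc k) / (1 - q)"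
    proof -
      have n1: "1 - al \<noteq> 0" "1 - q \<noteq> 0" "1 - be \<noteq> 0" using q al be by auto
      have h1: "(2 * q * (be ^ k * e 0 + tau / (1 - be)) + eps) / (1 - al) = c0 * be ^ k + G"
        unfolding c0_def G_def by (simp add: add_divide_distrib distrib_left mult_ac)
      have h2: "q * (G * (1 - q ^ k) / (1 - q)) + G = G * (1 - q ^ Suc k) / (1 - q)"
        using n1 by (simp add: field_simps)
      have h3: "q * (q ^ k / (1 - al)) = q ^ Suc k / (1 - al)" by simp
      show ?thesis unfolding h1 using h2 h3 by (simp add: algebra_simps)
    qed
    finally show ?case .
  qed
  have s: "c0 * Sg q be k \<le> c0 * (real k * (max q be) ^ (k - 1))"
    using Sg_bound[of q be k] q be c00 by (intro mult_left_mono) auto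
  have g: "G * (1 - q ^ k) / (1 - q) \<le> G / (1 - q)"
    using G0 q by (intro divide_right_mono) (auto simp: mult_left_le)
  have "G / (1 - q) = (2 * q * (tau / (1 - be)) + eps) / ((1 - q) * (1 - al))"
    unfolding G_def by simp
  then show ?thesis using ab[of k] s g unfolding c0_def by (simp add: mult.assoc)
qed



lemma Max_att: "\<exists>a. Max (range (f::'b::finite \<Rightarrow> real)) = f a"
proof -
  have "Max (range f) \<in> range f" by (rule Max_in) auto
  then show ?thesis by (metis imageE)
qed

lemma Min_att: "\<exists>a. Min (range (f::'b::finite \<Rightarrow> real)) = f a"
proof -
  have "Min (range f) \<in> range f" by (rule Min_in) auto
  then show ?thesis by (metis imageE)
qed

lemma supnorm_ge: "\<bar>X s\<bar> \<le> supnorm (X::'s::finite\<Rightarrow>real)"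
  unfolding supnorm_def by (rule Max_ge) auto

lemma supnorm_leI: "(\<And>s. \<bar>X s\<bar> \<le> c) \<Longrightarrow> supnorm (X::'s::finite\<Rightarrow>real) \<le> c"
  unfolding supnorm_def by (subst Max_le_iff) auto

lemma supnorm_nonneg: "0 \<le> supnorm (X::'s::finite\<Rightarrow>real)"
  using supnorm_ge[of X] abs_ge_zero order_trans by blast

locale mdp =
  fixes P :: "'a::finite \<Rightarrow> 's::finite \<Rightarrow> 's \<Rightarrow> real"
    and r :: "'s \<Rightarrow> 'a \<Rightarrow> real"
    and al :: real
  assumes P_nonneg: "\<And>a i j. P a i j \<ge> 0"
    and P_stoch: "\<And>a i. (\<Sum>j\<in>UNIV. P a i j) = 1"
    and r_bounds: "\<And>s a. 0 \<le> r s a \<and> r s a \<le> 1"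
    and al0: "0 < al" and al1: "al < 1"
begin

lemma avg_ge: "(\<And>j. Z j \<ge> c) \<Longrightarrow> (\<Sum>j\<in>UNIV. P a s j * Z j) \<ge> c"
proof -
  assume h: "\<And>j. Z j \<ge> c"
  have "(\<Sum>j\<in>UNIV. P a s j * c) \<le> (\<Sum>j\<in>UNIV. P a s j * Z j)"
    by (rule sum_mono) (simp add: h mult_left_mono P_nonneg)
  moreover have "(\<Sum>j\<in>UNIV. P a s j * c) = c" using P_stoch by (simp add: sum_distrib_right[symmetric])
  ultimately show ?thesis by simp
qed

lemma avg_le: "(\<And>j. Z j \<le> c) \<Longrightarrow> (\<Sum>j\<in>UNIV. P a s j * Z j) \<le> c"
proof -
  assume h: "\<And>j. Z j \<le> c"
  have "(\<Sum>j\<in>UNIV. P a s j * Z j) \<le> (\<Sum>j\<in>UNIV. P a s j * c)"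
    by (rule sum_mono) (simp add: h mult_left_mono P_nonneg)
  moreover have "(\<Sum>j\<in>UNIV. P a s j * c) = c" using P_stoch by (simp add: sum_distrib_right[symmetric])
  ultimately show ?thesis by simp
qed

lemma avg_abs: "(\<And>j. \<bar>Z j\<bar> \<le> c) \<Longrightarrow> \<bar>\<Sum>j\<in>UNIV. P a s j * Z j\<bar> \<le> c"
proof -
  assume h: "\<And>j. \<bar>Z j\<bar> \<le> c"
  have "(\<Sum>j\<in>UNIV. P a s j * Z j) \<le> c" by (rule avg_le) (use h abs_le_D1 in blast)
  moreover have "(\<Sum>j\<in>UNIV. P a s j * Z j) \<ge> -c"
  proof (rule avg_ge) fix j show "-c \<le> Z j" using h[of j] by arith qed
  ultimately show ?thesis by simp
qed

lemma Tpol_diff: "Tpol P r al mu X s - Tpol P r al mu Y s = al * (\<Sum>j\<in>UNIV. P (mu s) s j * (X j - Y j))"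
  unfolding Tpol_def by (simp add: algebra_simps sum_subtractf)

lemma Tpol_contr: "(\<And>j. \<bar>X j - Y j\<bar> \<le> c) \<Longrightarrow> \<bar>Tpol P r al mu X s - Tpol P r al mu Y s\<bar> \<le> al * c"
  unfolding Tpol_diff using al0 by (simp add: abs_mult avg_abs)

lemma Tpol_pow_contr: "(\<And>j. \<bar>X j - Y j\<bar> \<le> c) \<Longrightarrow>
   \<bar>(Tpol P r al mu ^^ n) X s - (Tpol P r al mu ^^ n) Y s\<bar> \<le> al ^ n * c"
proof (induction n arbitrary: s)
  case 0 then show ?case by simp
next
  case (Suc n)
  have "\<bar>Tpol P r al mu ((Tpol P r al mu ^^ n) X) s - Tpol P r al mu ((Tpol P r al mu ^^ n) Y) s\<bar> \<le> al * (al^n * c)"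
    by (rule Tpol_contr) (use Suc in auto)
  then show ?case by simp
qed

lemma Tpol_mono: "(\<And>j. X j \<le> Y j) \<Longrightarrow> Tpol P r al mu X s \<le> Tpol P r al mu Y s"
proof -
  assume h: "\<And>j. X j \<le> Y j"
  have "0 \<le> (\<Sum>j\<in>UNIV. P (mu s) s j * (Y j - X j))" by (rule avg_ge) (use h in simp)
  then have "0 \<le> Tpol P r al mu Y s - Tpol P r al mu X s" unfolding Tpol_diff using al0 by simp
  then show ?thesis by simp
qed

lemma Max_diff_le:
  fixes f g :: "'b::finite \<Rightarrow> real"
  assumes "\<And>a. \<bar>f a - g a\<bar> \<le> c"
  shows "\<bar>Max (range f) - Max (range g)\<bar> \<le> c"
proof -
  obtain a where a: "Max (range f) = f a" using Max_att by blast
  obtain b where b: "Max (range g) = g b" using Max_att by blast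
  have "g a \<le> Max (range g)" "f b \<le> Max (range f)" by (auto intro: Max_ge)
  then show ?thesis using a b assms[of a] assms[of b] by auto
qed

lemma Tbell_contr: "(\<And>j. \<bar>X j - Y j\<bar> \<le> c) \<Longrightarrow> \<bar>Tbell P r al X s - Tbell P r al Y s\<bar> \<le> al * c"
  unfolding Tbell_def
proof (rule Max_diff_le)
  fix a assume h: "\<And>j. \<bar>X j - Y j\<bar> \<le> c"
  have "\<bar>(\<Sum>j\<in>UNIV. P a s j * (X j - Y j))\<bar> \<le> c" by (rule avg_abs) (use h in auto)
  moreover have "(\<Sum>j\<in>UNIV. P a s j * X j) - (\<Sum>j\<in>UNIV. P a s j * Y j) = (\<Sum>j\<in>UNIV. P a s j * (X j - Y j))"
    by (simp add: algebra_simps sum_subtractf)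
  ultimately show "\<bar>r s a + al * (\<Sum>j\<in>UNIV. P a s j * X j) - (r s a + al * (\<Sum>j\<in>UNIV. P a s j * Y j))\<bar> \<le> al * c"
    using al0 by (simp add: abs_mult algebra_simps flip: right_diff_distrib)
qed

lemma Tbell_pow_contr: "(\<And>j. \<bar>X j - Y j\<bar> \<le> c) \<Longrightarrow>
   \<bar>(Tbell P r al ^^ n) X s - (Tbell P r al ^^ n) Y s\<bar> \<le> al ^ n * c"
proof (induction n arbitrary: s)
  case 0 then show ?case by simp
next
  case (Suc n)
  have "\<bar>Tbell P r al ((Tbell P r al ^^ n) X) s - Tbell P r al ((Tbell P r al ^^ n) Y) s\<bar> \<le> al * (al^n * c)"
    by (rule Tbell_contr) (use Suc in auto)
  then show ?case by simp
qed

lemma Tpol_le_Tbell: "Tpol P r al mu X s \<le> Tbell P r al X s"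
  unfolding Tpol_def Tbell_def by (rule Max_ge) auto

lemma Tbell_mono: "(\<And>j. X j \<le> Y j) \<Longrightarrow> Tbell P r al X s \<le> Tbell P r al Y s"
proof -
  assume h: "\<And>j. X j \<le> Y j"
  obtain a where a: "Tbell P r al X s = r s a + al * (\<Sum>j\<in>UNIV. P a s j * X j)"
    unfolding Tbell_def using Max_att[of "\<lambda>a. r s a + al * (\<Sum>j\<in>UNIV. P a s j * X j)"] by blast
  have "Tbell P r al X s = Tpol P r al (\<lambda>_. a) X s" unfolding a Tpol_def by simp
  also have "\<dots> \<le> Tpol P r al (\<lambda>_. a) Y s" by (rule Tpol_mono) (use h in auto)
  also have "\<dots> \<le> Tbell P r al Y s" by (rule Tpol_le_Tbell)
  finally show ?thesis .
qed

lemma Tbell_pow_mono: "(\<And>j. X j \<le> Y j) \<Longrightarrow> (Tbell P r al ^^ n) X s \<le> (Tbell P r al ^^ n) Y s"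
  by (induction n arbitrary: s) (auto intro: Tbell_mono)

lemma greedy: "\<exists>mu. \<forall>s. Tpol P r al mu X s = Tbell P r al X s"
proof -
  have "\<forall>s. \<exists>a. Tbell P r al X s = r s a + al * (\<Sum>j\<in>UNIV. P a s j * X j)"
    unfolding Tbell_def using Max_att by blast
  then obtain f where "\<forall>s. Tbell P r al X s = r s (f s) + al * (\<Sum>j\<in>UNIV. P (f s) s j * X j)" by metis
  then show ?thesis unfolding Tpol_def by auto
qed

lemma min_arg:
  assumes "\<And>s. Z s \<ge> al * (\<Sum>j\<in>UNIV. P (mu s) s j * Z j) + c"
  shows "Z s \<ge> c / (1 - al)"
proof -
  obtain s0 where s0: "Min (range Z) = Z s0" using Min_att by blast
  have mn: "\<And>j. Z j \<ge> Z s0" proof -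
    fix j have "Min (range Z) \<le> Z j" by (rule Min_le) auto
    then show "Z j \<ge> Z s0" using s0 by simp
  qed
  have "(\<Sum>j\<in>UNIV. P (mu s0) s0 j * Z j) \<ge> Z s0" by (rule avg_ge) (rule mn)
  then have "Z s0 \<ge> al * Z s0 + c" using assms[of s0] al0 by (smt (verit) mult_left_mono)
  then have "Z s0 \<ge> c / (1 - al)" using al1 by (simp add: divide_simps algebra_simps)
  then show ?thesis using mn[of s] by simp
qed


lemma pstep_nonneg: "pstep P mu n s j \<ge> 0"
  by (induction n arbitrary: s) (auto intro!: sum_nonneg mult_nonneg_nonneg P_nonneg)

lemma pstep_stoch: "(\<Sum>j\<in>UNIV. pstep P mu n s j) = 1"
proof (induction n arbitrary: s)
  case 0
  have "pstep P mu 0 s = (\<lambda>j. if s = j then 1 else 0)" by (rule ext) simp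
  then show ?case by (simp only: sum.delta) simp
next
  case (Suc n)
  have "(\<Sum>j\<in>UNIV. pstep P mu (Suc n) s j) = (\<Sum>j\<in>UNIV. \<Sum>l\<in>UNIV. P (mu s) s l * pstep P mu n l j)"
    by simp
  also have "\<dots> = (\<Sum>l\<in>UNIV. \<Sum>j\<in>UNIV. P (mu s) s l * pstep P mu n l j)"
    by (rule sum.swap)
  also have "\<dots> = (\<Sum>l\<in>UNIV. P (mu s) s l * (\<Sum>j\<in>UNIV. pstep P mu n l j))"
    by (simp add: sum_distrib_left)
  also have "\<dots> = 1" using Suc P_stoch by simp
  finally show ?case .
qed

definition fr :: "('s \<Rightarrow> 'a) \<Rightarrow> nat \<Rightarrow> 's \<Rightarrow> real" where
  "fr mu t s = (\<Sum>j\<in>UNIV. pstep P mu t s j * r j (mu j))"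

lemma fr_bounds: "0 \<le> fr mu t s \<and> fr mu t s \<le> 1"
proof
  show "0 \<le> fr mu t s" unfolding fr_def
    by (intro sum_nonneg mult_nonneg_nonneg pstep_nonneg) (use r_bounds in auto)
  have "fr mu t s \<le> (\<Sum>j\<in>UNIV. pstep P mu t s j * 1)" unfolding fr_def
    by (intro sum_mono mult_left_mono pstep_nonneg) (use r_bounds pstep_nonneg in auto)
  then show "fr mu t s \<le> 1" using pstep_stoch by simp
qed

lemma fr_0: "fr mu 0 s = r s (mu s)"
proof -
  have "fr mu 0 s = (\<Sum>j\<in>UNIV. if s = j then r j (mu j) else 0)"
    unfolding fr_def by (rule sum.cong) auto
  then show ?thesis by simp
qed

lemma fr_Suc: "fr mu (Suc t) s = (\<Sum>l\<in>UNIV. P (mu s) s l * fr mu t l)"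
proof -
  have "fr mu (Suc t) s = (\<Sum>j\<in>UNIV. \<Sum>l\<in>UNIV. P (mu s) s l * pstep P mu t l j * r j (mu j))"
    unfolding fr_def by (simp add: sum_distrib_right)
  also have "\<dots> = (\<Sum>l\<in>UNIV. \<Sum>j\<in>UNIV. P (mu s) s l * pstep P mu t l j * r j (mu j))"
    by (rule sum.swap)
  also have "\<dots> = (\<Sum>l\<in>UNIV. P (mu s) s l * fr mu t l)"
    unfolding fr_def by (simp add: sum_distrib_left mult.assoc)
  finally show ?thesis .
qed

lemma fr_summable: "summable (\<lambda>t. al ^ t * fr mu t s)"
proof (rule summable_comparison_test[where g="\<lambda>t. al ^ t"])
  show "\<exists>N. \<forall>n\<ge>N. norm (al ^ n * fr mu n s) \<le> al ^ n"
    using fr_bounds al0 by (auto simp: abs_mult intro!: mult_left_le)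
  show "summable (\<lambda>t. al ^ t)" by (rule summable_geometric) (use al0 al1 in auto)
qed

lemma Jpol_eq: "Jpol P r al mu s = (\<Sum>t. al ^ t * fr mu t s)"
  unfolding Jpol_def fr_def by simp

lemma Jpol_fix_h1: "(\<Sum>t. al ^ Suc t * fr mu (Suc t) s) = Jpol P r al mu s - r s (mu s)"
proof -
  have "(\<Sum>t. al ^ Suc t * fr mu (Suc t) s) = (\<Sum>t. al ^ t * fr mu t s) - al ^ 0 * fr mu 0 s"
    by (rule suminf_split_head[OF fr_summable])
  then show ?thesis by (simp only: Jpol_eq fr_0 power_0 mult_1)
qed

lemma Jpol_fix_h2: "al ^ Suc t * fr mu (Suc t) s = al * (\<Sum>l\<in>UNIV. P (mu s) s l * (al ^ t * fr mu t l))"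
proof -
  have "al ^ Suc t * fr mu (Suc t) s = al * (al ^ t * (\<Sum>l\<in>UNIV. P (mu s) s l * fr mu t l))"
    by (simp only: fr_Suc power_Suc mult.assoc)
  also have "\<dots> = al * (\<Sum>l\<in>UNIV. P (mu s) s l * (al ^ t * fr mu t l))"
    by (simp only: sum_distrib_left mult.left_commute)
  finally show ?thesis .
qed

lemma Jpol_fix: "Tpol P r al mu (Jpol P r al mu) s = Jpol P r al mu s"
proof -
  have e1: "Jpol P r al mu s - r s (mu s) = (\<Sum>t. al * (\<Sum>l\<in>UNIV. P (mu s) s l * (al ^ t * fr mu t l)))"
    unfolding Jpol_fix_h1[symmetric] Jpol_fix_h2 ..
  have e2: "(\<Sum>t. al * (\<Sum>l\<in>UNIV. P (mu s) s l * (al ^ t * fr mu t l))) = al * (\<Sum>t. (\<Sum>l\<in>UNIV. P (mu s) s l * (al ^ t * fr mu t l)))"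
    by (rule suminf_mult) (intro summable_sum summable_mult fr_summable)
  have e3: "(\<Sum>t. (\<Sum>l\<in>UNIV. P (mu s) s l * (al ^ t * fr mu t l))) = (\<Sum>l\<in>UNIV. (\<Sum>t. P (mu s) s l * (al ^ t * fr mu t l)))"
    by (rule suminf_sum) (intro summable_mult fr_summable)
  have e4: "(\<Sum>t. P (mu s) s l * (al ^ t * fr mu t l)) = P (mu s) s l * Jpol P r al mu l" for l
    unfolding Jpol_eq by (rule suminf_mult) (rule fr_summable)
  have "Jpol P r al mu s - r s (mu s) = al * (\<Sum>l\<in>UNIV. P (mu s) s l * Jpol P r al mu l)"
    using e1 e2 e3 e4 by simp
  then show ?thesis unfolding Tpol_def by simp
qed

lemma Jpol_bounds: "0 \<le> Jpol P r al mu s \<and> Jpol P r al mu s \<le> 1 / (1 - al)"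
proof
  show "0 \<le> Jpol P r al mu s" unfolding Jpol_eq
    by (rule suminf_nonneg[OF fr_summable]) (use fr_bounds al0 in auto)
  have "Jpol P r al mu s \<le> (\<Sum>t. al ^ t)" unfolding Jpol_eq
    by (rule suminf_le[OF _ fr_summable]) (use fr_bounds al0 al1 in \<open>auto intro!: mult_left_le summable_geometric\<close>)
  then show "Jpol P r al mu s \<le> 1 / (1 - al)" using suminf_geometric[of al] al0 al1 by simp
qed

lemma Jpol_fix': "Tpol P r al mu (Jpol P r al mu) = Jpol P r al mu"
  by (rule ext) (rule Jpol_fix)

lemma Jpol_pow_fix: "(Tpol P r al mu ^^ n) (Jpol P r al mu) = Jpol P r al mu"
  by (induction n) (simp_all add: Jpol_fix')

lemma Jpol_ge: assumes "\<And>s. Tpol P r al mu V s \<ge> V s"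
  shows "Jpol P r al mu s \<ge> V s"
proof -
  let ?Z = "\<lambda>s. Jpol P r al mu s - V s"
  have "?Z s \<ge> al * (\<Sum>j\<in>UNIV. P (mu s) s j * ?Z j) + 0" for s
    using Tpol_diff[of mu "Jpol P r al mu" s V] Jpol_fix[of mu s] assms[of s] by simp
  then have "?Z s \<ge> 0 / (1 - al)" by (rule min_arg)
  then show ?thesis by simp
qed

lemma Jpol_le_Jstar: "Jpol P r al mu s \<le> Jstar P r al s"
  unfolding Jstar_def by (rule Max_ge) auto

lemma Jstar_att: "\<exists>mu. Jstar P r al s = Jpol P r al mu s"
  unfolding Jstar_def by (rule Max_att)

lemma Jstar_fix: "Tbell P r al (Jstar P r al) s = Jstar P r al s"
proof -
  let ?V = "Jstar P r al"
  have le: "?V s \<le> Tbell P r al ?V s" for s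
  proof -
    obtain mu where mu: "?V s = Jpol P r al mu s" using Jstar_att by blast
    have "Jpol P r al mu s = Tpol P r al mu (Jpol P r al mu) s" using Jpol_fix by simp
    also have "\<dots> \<le> Tpol P r al mu ?V s" by (rule Tpol_mono) (rule Jpol_le_Jstar)
    also have "\<dots> \<le> Tbell P r al ?V s" by (rule Tpol_le_Tbell)
    finally show ?thesis using mu by simp
  qed
  obtain mu where g: "\<And>s. Tpol P r al mu ?V s = Tbell P r al ?V s" using greedy by blast
  have J1: "Jpol P r al mu s \<ge> ?V s" for s by (rule Jpol_ge) (use g le in simp)
  have "Jpol P r al mu s - Tbell P r al ?V s = al * (\<Sum>j\<in>UNIV. P (mu s) s j * (Jpol P r al mu j - ?V j))"
    using Tpol_diff[of mu "Jpol P r al mu" s ?V] Jpol_fix[of mu s] g[of s] by simp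
  also have "\<dots> \<ge> 0" using al0 by (intro mult_nonneg_nonneg avg_ge) (use J1 in auto)
  finally have "Jpol P r al mu s \<ge> Tbell P r al ?V s" by simp
  then show ?thesis using le[of s] Jpol_le_Jstar[of mu s] by simp
qed

lemma Jstar_fix': "Tbell P r al (Jstar P r al) = Jstar P r al"
  by (rule ext) (rule Jstar_fix)

lemma Jstar_pow_fix: "(Tbell P r al ^^ n) (Jstar P r al) = Jstar P r al"
  by (induction n) (simp_all add: Jstar_fix')

lemma Jstar_gap: "0 \<le> Jstar P r al s - Jpol P r al mu s \<and> Jstar P r al s - Jpol P r al mu s \<le> 1 / (1 - al)"
proof -
  obtain nu where "Jstar P r al s = Jpol P r al nu s" using Jstar_att by blast
  moreover have "0 \<le> Jpol P r al mu s" "Jpol P r al nu s \<le> 1 / (1 - al)" using Jpol_bounds by blast+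
  ultimately show ?thesis using Jpol_le_Jstar[of mu s] by linarith
qed

lemma Jpol_lt_Tbell: "Jpol P r al mu s \<le> Tbell P r al (Jpol P r al mu) s"
  using Tpol_le_Tbell[of mu "Jpol P r al mu" s] Jpol_fix by simp

end

definition cM :: "('s::finite \<Rightarrow> real^'d) \<Rightarrow> 's set \<Rightarrow> 's \<Rightarrow> 's \<Rightarrow> real" where
  "cM phi D t i = phi t \<bullet> (matrix_inv (gram phi D) *v phi i)"

lemma Mproj_eq: "Mproj phi D x t = (\<Sum>i\<in>D. x i * cM phi D t i)"
proof -
  have "matrix_inv (gram phi D) *v (\<Sum>i\<in>D. x i *\<^sub>R phi i) = (\<Sum>i\<in>D. x i *\<^sub>R (matrix_inv (gram phi D) *v phi i))"
    by (simp add: linear_sum[OF matrix_vector_mul_linear] matrix_vector_mult_scaleR)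
  then show ?thesis unfolding Mproj_def cM_def by (simp add: inner_sum_right)
qed

lemma Mproj_lin: "Mproj phi D (\<lambda>s. a * X s + b * Y s) t = a * Mproj phi D X t + b * Mproj phi D Y t"
  by (simp add: Mproj_eq sum_distrib_left sum.distrib algebra_simps)

lemma Mproj_bdd: "bdd_above {supnorm (Mproj phi D x) | x. supnorm x \<le> 1}"
proof (rule bdd_aboveI)
  fix y assume "y \<in> {supnorm (Mproj phi D x) | x. supnorm x \<le> 1}"
  then obtain x where y: "y = supnorm (Mproj phi D x)" and x: "supnorm x \<le> 1" by blast
  show "y \<le> (\<Sum>t\<in>UNIV. \<Sum>i\<in>D. \<bar>cM phi D t i\<bar>)" unfolding y
  proof (rule supnorm_leI)
    fix t
    have "\<bar>Mproj phi D x t\<bar> \<le> (\<Sum>i\<in>D. \<bar>x i * cM phi D t i\<bar>)" unfolding Mproj_eq by (rule sum_abs)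
    also have "\<dots> \<le> (\<Sum>i\<in>D. \<bar>cM phi D t i\<bar>)"
    proof (rule sum_mono)
      fix i have "\<bar>x i\<bar> \<le> 1" using supnorm_ge[of x i] x by simp
      then show "\<bar>x i * cM phi D t i\<bar> \<le> \<bar>cM phi D t i\<bar>" by (simp add: abs_mult mult_left_le_one_le)
    qed
    also have "\<dots> \<le> (\<Sum>t\<in>UNIV. \<Sum>i\<in>D. \<bar>cM phi D t i\<bar>)"
      by (rule member_le_sum) (auto intro: sum_nonneg)
    finally show "\<bar>Mproj phi D x t\<bar> \<le> (\<Sum>t\<in>UNIV. \<Sum>i\<in>D. \<bar>cM phi D t i\<bar>)" .
  qed
qed

lemma opnorm_ge: "supnorm x \<le> 1 \<Longrightarrow> supnorm (Mproj phi D x) \<le> opnorm (Mproj phi D)"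
  unfolding opnorm_def by (rule cSup_upper[OF _ Mproj_bdd]) blast

lemma opnorm_nonneg: "0 \<le> opnorm (Mproj phi D)"
proof -
  have "supnorm (\<lambda>_::'a. 0::real) \<le> 1" by (rule supnorm_leI) simp
  from opnorm_ge[OF this, of phi D] show ?thesis using supnorm_nonneg order_trans by blast
qed

lemma Mproj_le:
  fixes X :: "'s::finite \<Rightarrow> real"
  assumes h: "\<And>s. \<bar>X s\<bar> \<le> c"
  shows "\<bar>Mproj phi D X t\<bar> \<le> opnorm (Mproj phi D) * c"
proof -
  have c0: "c \<ge> 0" using h[of undefined] by simp
  show ?thesis
  proof (cases "c = 0")
    case True
    then have "X i = 0" for i using h[of i] by simp
    then show ?thesis using True by (simp add: Mproj_eq)
  next
    case False
    then have cp: "c > 0" using c0 by simp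
    let ?Y = "\<lambda>s. X s / c"
    have "supnorm ?Y \<le> 1"
    proof (rule supnorm_leI)
      fix s have "\<bar>X s / c\<bar> = \<bar>X s\<bar> / c" using cp by (simp add: abs_divide)
      then show "\<bar>X s / c\<bar> \<le> 1" using h[of s] cp by (simp add: divide_le_eq_1_pos)
    qed
    then have "supnorm (Mproj phi D ?Y) \<le> opnorm (Mproj phi D)" by (rule opnorm_ge)
    moreover have "\<bar>Mproj phi D ?Y t\<bar> \<le> supnorm (Mproj phi D ?Y)" by (rule supnorm_ge)
    moreover have "Mproj phi D ?Y t = Mproj phi D X t / c"
      by (simp add: Mproj_eq sum_divide_distrib)
    moreover have "\<bar>Mproj phi D X t / c\<bar> = \<bar>Mproj phi D X t\<bar> / c" using cp by (simp add: abs_divide)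
    ultimately have "\<bar>Mproj phi D X t\<bar> / c \<le> opnorm (Mproj phi D)" by linarith
    then show ?thesis using cp by (simp add: divide_simps mult.commute)
  qed
qed


context mdp
begin

lemma rec_a:
  fixes J :: "'s \<Rightarrow> real"
  assumes H: "H \<ge> 1"
    and e: "\<And>x. \<bar>J x - Jpol P r al mu x\<bar> \<le> e"
    and a: "\<And>x. \<bar>Jpol P r al mu x - Jstar P r al x\<bar> \<le> a"
    and la: "\<And>s. \<bar>(Tbell P r al ^^ H) J s - Tpol P r al mu' ((Tbell P r al ^^ (H - 1)) J) s\<bar> \<le> eps"
  shows "\<bar>Jpol P r al mu' s - Jstar P r al s\<bar> \<le> al ^ H * a + (2 * al ^ H * e + eps) / (1 - al)"
proof -
  let ?B = "Tbell P r al"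
  let ?V = "(?B ^^ (H - 1)) J"
  let ?TV = "?B ?V"
  let ?Jm = "Jpol P r al mu"
  let ?J' = "Jpol P r al mu'"
  let ?S = "Jstar P r al"
  obtain h where hH: "H = Suc h" using H by (cases H) auto
  have BH: "(?B ^^ H) X = ?B ((?B ^^ (H - 1)) X)" for X using hH by simp
  have BH2: "(?B ^^ H) X = (?B ^^ (H - 1)) (?B X)" for X using hH by (simp add: funpow_swap1)
  have q: "al * al ^ (H - 1) = al ^ H" using hH by simp
  have i1: "\<bar>?V x - (?B ^^ (H - 1)) ?Jm x\<bar> \<le> al ^ (H - 1) * e" for x by (rule Tbell_pow_contr) (rule e)
  have i2: "\<bar>?TV x - (?B ^^ H) ?Jm x\<bar> \<le> al ^ H * e" for x
    unfolding BH[symmetric] by (rule Tbell_pow_contr) (rule e)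
  have i3: "(?B ^^ H) ?Jm x \<ge> (?B ^^ (H - 1)) ?Jm x" for x
    unfolding BH2 by (rule Tbell_pow_mono) (rule Jpol_lt_Tbell)
  have tv: "?TV x - ?V x \<ge> - ((al ^ H + al ^ (H - 1)) * e)" for x
    using i1[of x] i2[of x] i3[of x] by (simp add: algebra_simps abs_le_iff)
  let ?z = "\<lambda>s. ?J' s - ?TV s"
  let ?c = "- ((al * al ^ H + al ^ H) * e) - eps"
  have zrec: "?z s \<ge> al * (\<Sum>j\<in>UNIV. P (mu' s) s j * ?z j) + ?c" for s
  proof -
    have d1: "Tpol P r al mu' ?J' s - Tpol P r al mu' ?V s = al * (\<Sum>j\<in>UNIV. P (mu' s) s j * (?J' j - ?V j))"
      by (rule Tpol_diff)
    have d2: "Tpol P r al mu' ?V s - ?TV s \<ge> - eps" using la[of s] unfolding BH by (simp add: abs_le_iff)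
    have d3: "(\<Sum>j\<in>UNIV. P (mu' s) s j * (?J' j - ?V j)) = (\<Sum>j\<in>UNIV. P (mu' s) s j * ?z j) + (\<Sum>j\<in>UNIV. P (mu' s) s j * (?TV j - ?V j))"
      by (simp add: algebra_simps sum.distrib[symmetric])
    have d4: "(\<Sum>j\<in>UNIV. P (mu' s) s j * (?TV j - ?V j)) \<ge> - ((al ^ H + al ^ (H - 1)) * e)"
      by (rule avg_ge) (rule tv)
    have f1: "al * (\<Sum>j\<in>UNIV. P (mu' s) s j * (?TV j - ?V j)) \<ge> al * (- ((al ^ H + al ^ (H - 1)) * e))"
      by (rule mult_left_mono[OF d4]) (use al0 in simp)
    have f2: "al * (- ((al ^ H + al ^ (H - 1)) * e)) = - ((al * al ^ H + al ^ H) * e)"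
      using q by (simp add: algebra_simps)
    have d5: "al * (\<Sum>j\<in>UNIV. P (mu' s) s j * (?TV j - ?V j)) \<ge> - ((al * al ^ H + al ^ H) * e)"
      using f1 unfolding f2 .
    have "?J' s = Tpol P r al mu' ?J' s" using Jpol_fix by simp
    then show ?thesis using d1 d2 d3 d5 by (simp add: algebra_simps)
  qed
  have zb: "?z s \<ge> ?c / (1 - al)" by (rule min_arg) (rule zrec)
  have ae: "\<bar>?S y - J y\<bar> \<le> a + e" for y using a[of y] e[of y] by (simp add: abs_le_iff)
  have sv: "\<bar>(?B ^^ H) ?S x - (?B ^^ H) J x\<bar> \<le> al ^ H * (a + e)" for x by (rule Tbell_pow_contr) (rule ae)
  then have sv': "?S x - ?TV x \<le> al ^ H * (a + e)" for x using Jstar_pow_fix[of H] unfolding BH by (simp add: abs_le_iff)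
  have up: "?S s - ?J' s \<le> al ^ H * (a + e) - ?c / (1 - al)" using sv'[of s] zb by simp
  have eq: "al ^ H * (a + e) - ?c / (1 - al) = al ^ H * a + (2 * al ^ H * e + eps) / (1 - al)"
    using al1 by (simp add: field_simps)
  have "0 \<le> ?S s - ?J' s" using Jstar_gap by blast
  then show ?thesis using up eq by (simp add: abs_le_iff)
qed

lemma rec_e:
  fixes J :: "'s \<Rightarrow> real" and phi :: "'s \<Rightarrow> real^'d"
  assumes H: "H \<ge> 1"
    and e: "\<And>x. \<bar>J x - Jpol P r al mu x\<bar> \<le> e"
    and w: "\<And>s. \<bar>w s\<bar> \<le> epsPE"
    and Jn: "Jn = Mproj phi D (\<lambda>s. ((Tpol P r al mu' ^^ m) ((Tbell P r al ^^ (H - 1)) J)) s + w s)"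
    and opn: "opnorm (Mproj phi D) \<le> dFV"
    and dapp: "\<And>s. \<bar>Mproj phi D (Jpol P r al mu') s - Jpol P r al mu' s\<bar> \<le> dapp"
  shows "\<bar>Jn s - Jpol P r al mu' s\<bar> \<le> al ^ (m + H - 1) * dFV * e
     + ((al ^ m + al ^ (m + H - 1)) / (1 - al) * dFV + dapp + dFV * epsPE)"
proof -
  let ?B = "Tbell P r al"
  let ?V = "(?B ^^ (H - 1)) J"
  let ?X = "(Tpol P r al mu' ^^ m) ?V"
  let ?J' = "Jpol P r al mu'"
  let ?S = "Jstar P r al"
  let ?Y = "\<lambda>s. ?X s + w s - ?J' s"
  have e0: "e \<ge> 0" using e[of undefined] by simp
  have split: "Jn s = Mproj phi D ?Y s + Mproj phi D ?J' s"
  proof -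
    have "(\<lambda>s. ?X s + w s) = (\<lambda>s. 1 * ?Y s + 1 * ?J' s)" by simp
    then show ?thesis unfolding Jn using Mproj_lin[of phi D 1 ?Y 1 ?J' s] by simp
  qed
  have js: "\<bar>J y - ?S y\<bar> \<le> e + 1 / (1 - al)" for y
    using e[of y] Jstar_gap[of y mu] by (simp add: abs_le_iff)
  have vs: "\<bar>?V x - ?S x\<bar> \<le> al ^ (H - 1) * (e + 1 / (1 - al))" for x
    using Tbell_pow_contr[where X=J and Y="?S" and n="H - 1" and s=x, OF js] Jstar_pow_fix by simp
  have vj: "\<bar>?V x - ?J' x\<bar> \<le> al ^ (H - 1) * (e + 1 / (1 - al)) + 1 / (1 - al)" for x
    using vs[of x] Jstar_gap[of x mu'] by (simp add: abs_le_iff)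
  have xj: "\<bar>?X x - ?J' x\<bar> \<le> al ^ m * (al ^ (H - 1) * (e + 1 / (1 - al)) + 1 / (1 - al))" for x
    using Tpol_pow_contr[where X="?V" and Y="?J'" and mu="mu'" and n=m and s=x, OF vj] Jpol_pow_fix by simp
  let ?K = "al ^ m * (al ^ (H - 1) * (e + 1 / (1 - al)) + 1 / (1 - al)) + epsPE"
  have yb: "\<bar>?Y x\<bar> \<le> ?K" for x using xj[of x] w[of x] by (simp add: abs_le_iff)
  have K0: "?K \<ge> 0" using yb[of undefined] by simp
  have "\<bar>Mproj phi D ?Y s\<bar> \<le> opnorm (Mproj phi D) * ?K" by (rule Mproj_le) (rule yb)
  also have "\<dots> \<le> dFV * ?K" by (rule mult_right_mono[OF opn K0])
  finally have m1: "\<bar>Mproj phi D ?Y s\<bar> \<le> dFV * ?K" .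
  have pw: "al ^ m * al ^ (H - 1) = al ^ (m + H - 1)" using H by (simp add: power_add[symmetric])
  have "dFV * ?K + dapp = al ^ (m + H - 1) * dFV * e + ((al ^ m + al ^ (m + H - 1)) / (1 - al) * dFV + dapp + dFV * epsPE)"
    using al1 pw[symmetric] by (simp add: field_simps)
  then show ?thesis using split m1 dapp[of s] by (simp add: abs_le_iff)
qed

end

theorem theorem1:
  fixes P :: "'a::finite \<Rightarrow> 's::finite \<Rightarrow> 's \<Rightarrow> real"
    and r :: "'s \<Rightarrow> 'a \<Rightarrow> real"
    and al :: real
    and phi :: "'s \<Rightarrow> real^'d"
    and D :: "nat \<Rightarrow> 's set"
    and J :: "nat \<Rightarrow> 's \<Rightarrow> real"
    and mu :: "nat \<Rightarrow> 's \<Rightarrow> 'a"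
    and w :: "nat \<Rightarrow> 's \<Rightarrow> real"
    and m H :: nat
    and epsLA epsPE :: real
  assumes P_nonneg: "\<And>a i j. P a i j \<ge> 0"
    and P_stoch: "\<And>a i. (\<Sum>j\<in>UNIV. P a i j) = 1"
    and r_bounds: "\<And>s a. 0 \<le> r s a \<and> r s a \<le> 1"
    and al: "0 < al" "al < 1"
    and mH: "m \<ge> 1" "H \<ge> 1"
    and eps: "epsLA \<ge> 0" "epsPE \<ge> 0"
    and rank: "\<And>k. dim (phi ` D k) = CARD('d)"
    and lookahead: "\<And>k. supnorm (\<lambda>s. ((Tbell P r al ^^ H) (J k)) s
                       - Tpol P r al (mu (Suc k)) ((Tbell P r al ^^ (H - 1)) (J k)) s) \<le> epsLA"
    and noise_supp: "\<And>k i. i \<notin> D k \<Longrightarrow> w (Suc k) i = 0"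
    and noise_bd: "\<And>k. supnorm (w (Suc k)) \<le> epsPE"
    and update: "\<And>k. J (Suc k) = Mproj phi (D k)
                    (\<lambda>s. ((Tpol P r al (mu (Suc k)) ^^ m) ((Tbell P r al ^^ (H - 1)) (J k))) s
                         + w (Suc k) s)"
    and FV_finite: "bdd_above ((\<lambda>k. opnorm (Mproj phi (D (k - 1)))) ` {1..})"
    and cond: "real (m + H - 1) >
       ln (SUP k\<in>{1..}. opnorm (Mproj phi (D (k - 1)))) / ln (1 / al)"
  shows "\<forall>k\<ge>1.
    (let dFV = (SUP k\<in>{1..}. opnorm (Mproj phi (D (k - 1))));
         dapp = (SUP p\<in>{1..} \<times> (UNIV :: ('s \<Rightarrow> 'a) set).
                   supnorm (\<lambda>s. Mproj phi (D (fst p - 1)) (Jpol P r al (snd p)) s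
                                 - Jpol P r al (snd p) s));
         tau = (al ^ m + al ^ (m + H - 1)) / (1 - al) * dFV + dapp + dFV * epsPE;
         beta = al ^ (m + H - 1) * dFV
     in supnorm (\<lambda>s. Jpol P r al (mu k) s - Jstar P r al s)
        \<le> al ^ (k * H) / (1 - al)
          + 2 * al ^ H * supnorm (\<lambda>s. Jpol P r al (mu 0) s - J 0 s) / (1 - al)
              * real k * (max (al ^ H) beta) ^ (k - 1)
          + (2 * al ^ H * (tau / (1 - beta)) + epsLA) / ((1 - al ^ H) * (1 - al)))"
proof -
  interpret mdp P r al by unfold_locales (use P_nonneg P_stoch r_bounds al in auto)
  define dFV where "dFV = (SUP k\<in>{1..}. opnorm (Mproj phi (D (k - 1))))"
  define dapp where "dapp = (SUP p\<in>{1..} \<times> (UNIV :: ('s \<Rightarrow> 'a) set).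
                   supnorm (\<lambda>s. Mproj phi (D (fst p - 1)) (Jpol P r al (snd p)) s
                                 - Jpol P r al (snd p) s))"
  define tau where "tau = (al ^ m + al ^ (m + H - 1)) / (1 - al) * dFV + dapp + dFV * epsPE"
  define beta where "beta = al ^ (m + H - 1) * dFV"
  have opk: "opnorm (Mproj phi (D k)) \<le> dFV" for k
  proof -
    have "opnorm (Mproj phi (D (Suc k - 1))) \<le> dFV"
      unfolding dFV_def by (rule cSUP_upper[OF _ FV_finite]) simp
    then show ?thesis by simp
  qed
  have dFV0: "dFV \<ge> 0" using opk[of 0] opnorm_nonneg[of phi "D 0"] by linarith
  have beta1: "beta < 1"
  proof (cases "dFV = 0")
    case True then show ?thesis unfolding beta_def by simp
  next
    case False
    then have dp: "dFV > 0" using dFV0 by simp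
    have l0: "ln (1 / al) > 0" using al by simp
    have "ln dFV / ln (1 / al) < real (m + H - 1)" using cond unfolding dFV_def[symmetric] .
    then have "ln dFV < real (m + H - 1) * ln (1 / al)" using l0 by (simp add: divide_less_eq)
    also have "\<dots> = ln ((1 / al) ^ (m + H - 1))" using al by (simp add: ln_realpow)
    finally have "dFV < (1 / al) ^ (m + H - 1)" using dp al by (simp add: ln_less_cancel_iff)
    then have "dFV < 1 / al ^ (m + H - 1)" by (simp add: power_one_over)
    then show ?thesis unfolding beta_def using al by (simp add: field_simps)
  qed
  have beta0: "beta \<ge> 0" unfolding beta_def using dFV0 al by simp
  have dapp_bdd: "bdd_above ((\<lambda>p. supnorm (\<lambda>s. Mproj phi (D (fst p - 1)) (Jpol P r al (snd p)) s
                                 - Jpol P r al (snd p) s)) ` ({1..} \<times> (UNIV :: ('s \<Rightarrow> 'a) set)))"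
  proof (rule bdd_aboveI2)
    fix p :: "nat \<times> ('s \<Rightarrow> 'a)"
    show "supnorm (\<lambda>s. Mproj phi (D (fst p - 1)) (Jpol P r al (snd p)) s - Jpol P r al (snd p) s)
          \<le> dFV / (1 - al) + 1 / (1 - al)"
    proof (rule supnorm_leI)
      fix s
      have jb: "\<bar>Jpol P r al (snd p) x\<bar> \<le> 1 / (1 - al)" for x using Jpol_bounds[of "snd p" x] by simp
      have "\<bar>Mproj phi (D (fst p - 1)) (Jpol P r al (snd p)) s\<bar> \<le> opnorm (Mproj phi (D (fst p - 1))) * (1 / (1 - al))"
        by (rule Mproj_le) (rule jb)
      also have "\<dots> \<le> dFV * (1 / (1 - al))" using opk al by (intro mult_right_mono) auto
      finally show "\<bar>Mproj phi (D (fst p - 1)) (Jpol P r al (snd p)) s - Jpol P r al (snd p) s\<bar>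
          \<le> dFV / (1 - al) + 1 / (1 - al)" using jb[of s] by (simp add: abs_le_iff)
    qed
  qed
  have dappk: "supnorm (\<lambda>s. Mproj phi (D k) (Jpol P r al nu) s - Jpol P r al nu s) \<le> dapp" for k nu
  proof -
    have "supnorm (\<lambda>s. Mproj phi (D (fst (Suc k, nu) - 1)) (Jpol P r al (snd (Suc k, nu))) s
                                 - Jpol P r al (snd (Suc k, nu)) s) \<le> dapp"
      unfolding dapp_def by (rule cSUP_upper[OF _ dapp_bdd]) simp
    then show ?thesis by simp
  qed
  have dapp0: "dapp \<ge> 0" using dappk[of 0 "mu 0"] supnorm_nonneg order_trans by blast
  have tau0: "tau \<ge> 0" unfolding tau_def using dFV0 dapp0 al eps by (intro add_nonneg_nonneg mult_nonneg_nonneg divide_nonneg_pos) auto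
  define e where "e k = supnorm (\<lambda>s. J k s - Jpol P r al (mu k) s)" for k
  define a where "a k = supnorm (\<lambda>s. Jpol P r al (mu k) s - Jstar P r al s)" for k
  have erec: "e (Suc k) \<le> beta * e k + tau" for k
    unfolding e_def[of "Suc k"]
  proof (rule supnorm_leI)
    fix s
    have "\<bar>J (Suc k) s - Jpol P r al (mu (Suc k)) s\<bar> \<le> al ^ (m + H - 1) * dFV * e k
     + ((al ^ m + al ^ (m + H - 1)) / (1 - al) * dFV + dapp + dFV * epsPE)"
    proof (rule rec_e[where mu="mu k" and w="w (Suc k)" and D="D k"])
      show "1 \<le> H" using mH by simp
      show "\<bar>J k x - Jpol P r al (mu k) x\<bar> \<le> e k" for x unfolding e_def by (rule supnorm_ge)
      show "\<bar>w (Suc k) x\<bar> \<le> epsPE" for x using supnorm_ge[of "w (Suc k)" x] noise_bd[of k] by linarith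
      show "J (Suc k) = Mproj phi (D k) (\<lambda>s. (Tpol P r al (mu (Suc k)) ^^ m) ((Tbell P r al ^^ (H - 1)) (J k)) s + w (Suc k) s)"
        by (rule update)
      show "opnorm (Mproj phi (D k)) \<le> dFV" by (rule opk)
      show "\<bar>Mproj phi (D k) (Jpol P r al (mu (Suc k))) x - Jpol P r al (mu (Suc k)) x\<bar> \<le> dapp" for x
        using supnorm_ge[of "\<lambda>s. Mproj phi (D k) (Jpol P r al (mu (Suc k))) s - Jpol P r al (mu (Suc k)) s" x]
          dappk[of k "mu (Suc k)"] by linarith
    qed
    then show "\<bar>J (Suc k) s - Jpol P r al (mu (Suc k)) s\<bar> \<le> beta * e k + tau"
      unfolding beta_def tau_def by simp
  qed
  have arec: "a (Suc k) \<le> al ^ H * a k + (2 * al ^ H * e k + epsLA) / (1 - al)" for k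
    unfolding a_def[of "Suc k"]
  proof (rule supnorm_leI)
    fix s
    show "\<bar>Jpol P r al (mu (Suc k)) s - Jstar P r al s\<bar> \<le> al ^ H * a k + (2 * al ^ H * e k + epsLA) / (1 - al)"
    proof (rule rec_a[where J="J k" and mu="mu k"])
      show "1 \<le> H" using mH by simp
      show "\<bar>J k x - Jpol P r al (mu k) x\<bar> \<le> e k" for x unfolding e_def by (rule supnorm_ge)
      show "\<bar>Jpol P r al (mu k) x - Jstar P r al x\<bar> \<le> a k" for x unfolding a_def by (rule supnorm_ge)
      show "\<bar>(Tbell P r al ^^ H) (J k) x - Tpol P r al (mu (Suc k)) ((Tbell P r al ^^ (H - 1)) (J k)) x\<bar> \<le> epsLA" for x
        using supnorm_ge[of "\<lambda>s. (Tbell P r al ^^ H) (J k) s - Tpol P r al (mu (Suc k)) ((Tbell P r al ^^ (H - 1)) (J k)) s" x]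
          lookahead[of k] by linarith
    qed
  qed
  have a0: "a 0 \<le> 1 / (1 - al)" unfolding a_def
  proof (rule supnorm_leI)
    fix s show "\<bar>Jpol P r al (mu 0) s - Jstar P r al s\<bar> \<le> 1 / (1 - al)"
      using Jstar_gap[of s "mu 0"] by (simp add: abs_le_iff)
  qed
  have e00: "e 0 \<ge> 0" unfolding e_def by (rule supnorm_nonneg)
  obtain h where hH: "H = Suc h" using mH by (cases H) auto
  have q0: "0 < al ^ H" using al by simp
  have q1: "al ^ H < 1"
  proof -
    have "al ^ h \<le> 1" using al by (intro power_le_one) auto
    then have "al * al ^ h \<le> al" using al by (simp add: mult_left_le)
    then show ?thesis using hH al by (simp only: power_Suc)
  qed
  have fin: "a k \<le> (al ^ H) ^ k / (1 - al) + 2 * al ^ H * e 0 / (1 - al) * real k * (max (al ^ H) beta) ^ (k - 1)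
      + (2 * al ^ H * (tau / (1 - beta)) + epsLA) / ((1 - al ^ H) * (1 - al))" for k
    by (rule final_alg[OF q0 q1 al beta0 beta1 tau0 eps(1) erec e00 arec a0])
  have sw: "e 0 = supnorm (\<lambda>s. Jpol P r al (mu 0) s - J 0 s)"
    unfolding e_def by (simp add: abs_minus_commute supnorm_def)
  have pk: "(al ^ H) ^ k = al ^ (k * H)" for k by (simp add: power_mult[symmetric] mult.commute)
  have main: "\<forall>k\<ge>1. supnorm (\<lambda>s. Jpol P r al (mu k) s - Jstar P r al s)
        \<le> al ^ (k * H) / (1 - al)
          + 2 * al ^ H * supnorm (\<lambda>s. Jpol P r al (mu 0) s - J 0 s) / (1 - al)
              * real k * (max (al ^ H) beta) ^ (k - 1)
          + (2 * al ^ H * (tau / (1 - beta)) + epsLA) / ((1 - al ^ H) * (1 - al))"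
    using fin unfolding a_def sw pk by blast
  show ?thesis unfolding Let_def dFV_def[symmetric] dapp_def[symmetric]
    unfolding tau_def[symmetric] beta_def[symmetric] by (rule main)
qed

end
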